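(* Let $\lambda\in\mathcal O$ be a nonzero limit ordinal, let $\mathcal A,\mathcal B:\mathcal O\to\mathcal P(\mathsf{Tm})$ be functions into sets of terms, let $r$ be a term and $e$ an evaluation frame, with $\limsup$ computed in the powerset lattice of terms. Then (1) $\limsup_{\alpha\to\lambda}(r\cdot\mathcal A(\alpha))\subseteq r\cdot\limsup_\lambda\mathcal A$; (2) $\limsup_{\alpha\to\lambda}e^{-1}(\mathcal A(\alpha))\subseteq e^{-1}(\limsup_\lambda\mathcal A)$; (3) $\limsup_{\alpha\to\lambda}(\mathcal A(\alpha)\cup\mathcal B(\alpha))\subseteq\limsup_\lambda\mathcal A\cup\limsup_\lambda\mathcal B$; (4) if $\mathcal A(\alpha)\subseteq\mathsf V$ for all $\alpha<\lambda$, then $\limsup_{\alpha\to\lambda}{}^{\rhd}(\mathcal A(\alpha))\subseteq{}^{\rhd}(\limsup_\lambda\mathcal A)$.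
   Context: $\mathcal O$ is the set of ordinals $\le\top_{\mathsf{ord}}$ for a fixed ordinal $\top_{\mathsf{ord}}$ ($=\beth_\omega$). For $f:\mathcal O\to\mathfrak L$ into a complete lattice and a nonzero limit $\lambda\in\mathcal O$: $\liminf_{\alpha\to\lambda}f(\alpha)=\sup_{\alpha_0<\lambda}\inf_{\alpha_0\le\alpha<\lambda}f(\alpha)$, $\limsup_{\alpha\to\lambda}f(\alpha)=\inf_{\alpha_0<\lambda}\sup_{\alpha_0\le\alpha<\lambda}f(\alpha)$. Terms ($\mathsf{Tm}$): $r,s,t::=c\mid x\mid\lambda x\,t\mid r\,s$, with variables $x$ and constants $c::=\langle\rangle\mid\mathsf{pair}\mid\mathsf{fst}\mid\mathsf{snd}\mid\mathsf{inl}\mid\mathsf{inr}\mid\mathsf{case}\mid\mathsf{in}\mid\mathsf{out}\mid\mathsf{fix}^\mu_n\mid\mathsf{fix}^\nu_n$ ($n\in\mathbb N$); $t_{1..n}$ abbreviates $t_1\dots t_n$. Values: $\lambda x t$, $\mathsf{pair}\,t_1\,t_2$, $\mathsf{inl}\,t$, $\mathsf{inr}\,t$, $\mathsf{in}\,t$, any constant $c$, $\mathsf{pair}\,t$, and $\mathsf{fix}^\nabla_n s\,t_{1..m}$ with $m\le n$, $\nabla\in\{\mu,\nu\}$. Evaluation frames: $e(\_)::=\_\,s\mid\mathsf{fst}\,\_\mid\mathsf{snd}\,\_\mid\mathsf{case}\,\_\mid\mathsf{out}\,\_\mid\mathsf{fix}^\mu_n\,s\,t_{1..n}\,\_$; evaluation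 contexts $E$ are finite (possibly empty) compositions of frames. $\mathsf V$ is the set of all values together with all terms $E(x)$ ($E$ an evaluation context, $x$ a variable). Reduction $\longrightarrow$ is the closure under all term constructs of: $(\lambda x t)s\to[s/x]t$; $\mathsf{fst}(\mathsf{pair}\,r\,s)\to r$; $\mathsf{snd}(\mathsf{pair}\,r\,s)\to s$; $\mathsf{case}(\mathsf{inl}\,r)\to\lambda x\lambda y.x\,r$; $\mathsf{case}(\mathsf{inr}\,r)\to\lambda x\lambda y.y\,r$ ($x,y\notin FV(r)$); $\mathsf{out}(\mathsf{in}\,r)\to r$; $\mathsf{fix}^\mu_n\,s\,t_{1..n}(\mathsf{in}\,t)\to s(\mathsf{fix}^\mu_n s)t_{1..n}(\mathsf{in}\,t)$; $\mathsf{out}(\mathsf{fix}^\nu_n s\,t_{1..n})\to\mathsf{out}(s(\mathsf{fix}^\nu_n s)t_{1..n})$. $\mathsf S$ is the set of strongly normalizing terms. Safe reduction $\rhd$ is the least relation closed under evaluation contexts ($t\rhd t'\Rightarrow E(t)\rhd E(t')$) and transitivity containing: $(\lambda x t)s\rhd[s/x]t$ if $s\in\mathsf S$; $\mathsf{fst}(\mathsf{pair}\,r\,s)\rhd r$ if $s\in\mathsf S$; $\mathsf{snd}(\mathsf{pair}\,r\,s)\rhd s$ if $r\in\mathsf S$; $\mathsf{out}(\mathsf{in}\,r)\rhd r$; $\mathsf{case}(\mathsf{inl}\,r)\rhd\lambda x\lambda y.x\,r$; $\mathsf{case}(\mathsf{inr}\,r)\rhd\lambda x\lambda y.y\,r$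 ($x,y\notin FV(r)$); $\mathsf{fix}^\mu_n s\,t_{1..n}(\mathsf{in}\,r)\rhd s(\mathsf{fix}^\mu_n s)t_{1..n}(\mathsf{in}\,r)$; $\mathsf{out}(\mathsf{fix}^\nu_n s\,t_{1..n})\rhd\mathsf{out}(s(\mathsf{fix}^\nu_n s)t_{1..n})$. For a set of terms $\mathcal A$: ${}^{\rhd}\mathcal A=\{t\mid t\in\mathcal A\text{ or }t\rhd t'\text{ for some }t'\in\mathcal A\}$, $r\cdot\mathcal A=\{r\,s\mid s\in\mathcal A\}$, $e^{-1}\mathcal A=\{r\mid e(r)\in\mathcal A\}$. *)

theory Defs
  imports Main
begin

text \<open>The ordinal index set O is rendered as an arbitrary well-ordered type.\<close>

definition is_nonzero_limit :: "'o::wellorder \<Rightarrow> bool" where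
  "is_nonzero_limit l \<longleftrightarrow> (\<exists>a. a < l) \<and> (\<forall>a<l. \<exists>b. a < b \<and> b < l)"

definition ord_liminf :: "('o::wellorder \<Rightarrow> 'b::complete_lattice) \<Rightarrow> 'o \<Rightarrow> 'b" where
  "ord_liminf f l = (SUP a0\<in>{..<l}. INF a\<in>{a0..<l}. f a)"

definition ord_limsup :: "('o::wellorder \<Rightarrow> 'b::complete_lattice) \<Rightarrow> 'o \<Rightarrow> 'b" where
  "ord_limsup f l = (INF a0\<in>{..<l}. SUP a\<in>{a0..<l}. f a)"

section \<open>Terms (de Bruijn indices: terms up to alpha-equivalence)\<close>

datatype const = CUnit | CPair | CFst | CSnd | CInl | CInr | CCase | CIn | COut
  | CFixMu nat | CFixNu nat

datatype tm = C const | Var nat | Lam tm | App tm tm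

definition apps :: "tm \<Rightarrow> tm list \<Rightarrow> tm" where
  "apps r ts = foldl App r ts"

fun lift :: "nat \<Rightarrow> tm \<Rightarrow> tm" where
  "lift k (C c) = C c"
| "lift k (Var i) = (if i < k then Var i else Var (Suc i))"
| "lift k (Lam t) = Lam (lift (Suc k) t)"
| "lift k (App t u) = App (lift k t) (lift k u)"

fun subst :: "tm \<Rightarrow> nat \<Rightarrow> tm \<Rightarrow> tm" where
  "subst (C c) k s = C c"
| "subst (Var i) k s = (if i < k then Var i else if i = k then s else Var (i - 1))"
| "subst (Lam t) k s = Lam (subst t (Suc k) (lift 0 s))"
| "subst (App t u) k s = App (subst t k s) (subst u k s)"

text \<open>lambda x lambda y. x r  and  lambda x lambda y. y r, with x, y not free in r\<close>
definition case_l :: "tm \<Rightarrow> tm" where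
  "case_l r = Lam (Lam (App (Var 1) (lift 0 (lift 0 r))))"
definition case_r :: "tm \<Rightarrow> tm" where
  "case_r r = Lam (Lam (App (Var 0) (lift 0 (lift 0 r))))"

inductive red :: "tm \<Rightarrow> tm \<Rightarrow> bool" where
  beta: "red (App (Lam t) s) (subst t 0 s)"
| fst: "red (App (C CFst) (App (App (C CPair) r) s)) r"
| snd: "red (App (C CSnd) (App (App (C CPair) r) s)) s"
| case_inl: "red (App (C CCase) (App (C CInl) r)) (case_l r)"
| case_inr: "red (App (C CCase) (App (C CInr) r)) (case_r r)"
| out_in: "red (App (C COut) (App (C CIn) r)) r"
| fix_mu: "length ts = n \<Longrightarrow>
    red (App (apps (App (C (CFixMu n)) s) ts) (App (C CIn) t))
        (App (apps (App s (App (C (CFixMu n)) s)) ts) (App (C CIn) t))"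
| fix_nu: "length ts = n \<Longrightarrow>
    red (App (C COut) (apps (App (C (CFixNu n)) s) ts))
        (App (C COut) (apps (App s (App (C (CFixNu n)) s)) ts))"
| lam: "red t t' \<Longrightarrow> red (Lam t) (Lam t')"
| app1: "red t t' \<Longrightarrow> red (App t u) (App t' u)"
| app2: "red u u' \<Longrightarrow> red (App t u) (App t u')"

inductive SN :: "tm \<Rightarrow> bool" where
  SNI: "(\<And>t'. red t t' \<Longrightarrow> SN t') \<Longrightarrow> SN t"

definition S :: "tm set" where
  "S = {t. SN t}"

datatype frame = FApp tm | FFst | FSnd | FCase | FOut | FFix tm "tm list"

fun fill :: "frame \<Rightarrow> tm \<Rightarrow> tm" where
  "fill (FApp s) r = App r s"
| "fill FFst r = App (C CFst) r"
| "fill FSnd r = App (C CSnd) r"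
| "fill FCase r = App (C CCase) r"
| "fill FOut r = App (C COut) r"
| "fill (FFix s ts) r = App (apps (App (C (CFixMu (length ts))) s) ts) r"

fun plugE :: "frame list \<Rightarrow> tm \<Rightarrow> tm" where
  "plugE [] t = t"
| "plugE (e # E) t = fill e (plugE E t)"

inductive is_value :: "tm \<Rightarrow> bool" where
  "is_value (Lam t)"
| "is_value (App (App (C CPair) t1) t2)"
| "is_value (App (C CInl) t)"
| "is_value (App (C CInr) t)"
| "is_value (App (C CIn) t)"
| "is_value (C c)"
| "is_value (App (C CPair) t)"
| "length ts \<le> n \<Longrightarrow> is_value (apps (App (C (CFixMu n)) s) ts)"
| "length ts \<le> n \<Longrightarrow> is_value (apps (App (C (CFixNu n)) s) ts)"

definition V :: "tm set" where
  "V = {t. is_value t} \<union> {plugE E (Var x) | E x. True}"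

inductive safe :: "tm \<Rightarrow> tm \<Rightarrow> bool" where
  beta: "s \<in> S \<Longrightarrow> safe (App (Lam t) s) (subst t 0 s)"
| fst: "s \<in> S \<Longrightarrow> safe (App (C CFst) (App (App (C CPair) r) s)) r"
| snd: "r \<in> S \<Longrightarrow> safe (App (C CSnd) (App (App (C CPair) r) s)) s"
| out_in: "safe (App (C COut) (App (C CIn) r)) r"
| case_inl: "safe (App (C CCase) (App (C CInl) r)) (case_l r)"
| case_inr: "safe (App (C CCase) (App (C CInr) r)) (case_r r)"
| fix_mu: "length ts = n \<Longrightarrow>
    safe (App (apps (App (C (CFixMu n)) s) ts) (App (C CIn) r))
         (App (apps (App s (App (C (CFixMu n)) s)) ts) (App (C CIn) r))"
| fix_nu: "length ts = n \<Longrightarrow>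
    safe (App (C COut) (apps (App (C (CFixNu n)) s) ts))
         (App (C COut) (apps (App s (App (C (CFixNu n)) s)) ts))"
| ctx: "safe t t' \<Longrightarrow> safe (plugE E t) (plugE E t')"
| trans: "safe t t' \<Longrightarrow> safe t' t'' \<Longrightarrow> safe t t''"

definition safe_pre :: "tm set \<Rightarrow> tm set" where
  "safe_pre A = {t. t \<in> A \<or> (\<exists>t'. safe t t' \<and> t' \<in> A)}"

definition app_set :: "tm \<Rightarrow> tm set \<Rightarrow> tm set" where
  "app_set r A = {App r s | s. s \<in> A}"

definition frame_inv :: "frame \<Rightarrow> tm set \<Rightarrow> tm set" where
  "frame_inv e A = {r. fill e r \<in> A}"

end

theory Submission imports Defs begin
lemma mem_limsup: "t \<in> ord_limsup f l \<longleftrightarrow> (\<forall>a0<l. \<exists>a. a0 \<le> a \<and> a < l \<and> t \<in> f a)"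
  unfolding ord_limsup_def by (auto; meson atLeastLessThan_iff lessThan_iff)

fun hd_of :: "tm \<Rightarrow> tm" where
  "hd_of (App t u) = hd_of t"
| "hd_of t = t"

lemma apps_snoc[simp]: "apps t (ts @ [x]) = App (apps t ts) x"
  by (simp add: apps_def)
lemma apps_Nil[simp]: "apps t [] = t" by (simp add: apps_def)
lemma hd_apps[simp]: "hd_of (apps t ts) = hd_of t"
  by (induct ts rule: rev_induct) auto

lemma apps_App_eq: "\<exists>a b. apps (App x y) ts = App a b"
  by (cases ts rule: rev_exhaust) auto

lemma apps_App_neq[simp]: "apps (App x y) ts \<noteq> C c" "apps (App x y) ts \<noteq> Lam t" "apps (App x y) ts \<noteq> Var v"
  "C c \<noteq> apps (App x y) ts" "Lam t \<noteq> apps (App x y) ts" "Var v \<noteq> apps (App x y) ts"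
  using apps_App_eq[of x y ts] by auto

lemma apps_inj: "apps (App (C c) s) ts = apps (App (C c') s') ts' \<Longrightarrow> c = c' \<and> s = s' \<and> ts = ts'"
proof (induct ts arbitrary: ts' rule: rev_induct)
  case Nil then show ?case
    by (cases ts' rule: rev_exhaust) auto
next
  case (snoc x xs) then show ?case
    by (cases ts' rule: rev_exhaust) auto
qed

inductive st :: "tm \<Rightarrow> tm \<Rightarrow> bool" where
  beta: "s \<in> S \<Longrightarrow> st (App (Lam t) s) (subst t 0 s)"
| fst: "s \<in> S \<Longrightarrow> st (App (C CFst) (App (App (C CPair) r) s)) r"
| snd: "r \<in> S \<Longrightarrow> st (App (C CSnd) (App (App (C CPair) r) s)) s"
| out_in: "st (App (C COut) (App (C CIn) r)) r"
| case_inl: "st (App (C CCase) (App (C CInl) r)) (case_l r)"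
| case_inr: "st (App (C CCase) (App (C CInr) r)) (case_r r)"
| fix_mu: "length ts = n \<Longrightarrow>
    st (App (apps (App (C (CFixMu n)) s) ts) (App (C CIn) r))
         (App (apps (App s (App (C (CFixMu n)) s)) ts) (App (C CIn) r))"
| fix_nu: "length ts = n \<Longrightarrow>
    st (App (C COut) (apps (App (C (CFixNu n)) s) ts))
         (App (C COut) (apps (App s (App (C (CFixNu n)) s)) ts))"
| fr: "st t t' \<Longrightarrow> st (fill e t) (fill e t')"

lemma plug_st: "st\<^sup>+\<^sup>+ t t' \<Longrightarrow> st\<^sup>+\<^sup>+ (plugE E t) (plugE E t')"
proof (induct E)
  case (Cons e E)
  have "st\<^sup>+\<^sup>+ (fill e x) (fill e y)" if "st\<^sup>+\<^sup>+ x y" for x y using that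
    by (induct rule: tranclp_induct) (auto intro: st.fr tranclp.intros)
  with Cons show ?case by simp
qed simp

lemma safe_st: "safe t t' \<Longrightarrow> st\<^sup>+\<^sup>+ t t'"
  by (induct rule: safe.induct) (auto intro: st.intros plug_st)

fun good_hd :: "tm \<Rightarrow> bool" where
  "good_hd (Lam _) = True"
| "good_hd (C c) = (c \<in> {CFst, CSnd, CCase, COut} \<or> (\<exists>n. c = CFixMu n))"
| "good_hd _ = False"

lemma st_hd: "st t t' \<Longrightarrow> good_hd (hd_of t)"
  by (induct rule: st.induct) (auto, case_tac e, auto)

lemma fill_eq: "fill e t = App a b \<longleftrightarrow> (case e of FApp s \<Rightarrow> a = t \<and> b = s | FFst \<Rightarrow> a = C CFst \<and> b = t
  | FSnd \<Rightarrow> a = C CSnd \<and> b = t | FCase \<Rightarrow> a = C CCase \<and> b = t | FOut \<Rightarrow> a = C COut \<and> b = t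
  | FFix s ts \<Rightarrow> a = apps (App (C (CFixMu (length ts))) s) ts \<and> b = t)"
  by (cases e) auto

lemma fill_eq2: "App a b = fill e t \<longleftrightarrow> fill e t = App a b" by auto
lemmas fill_eqs = fill_eq fill_eq2[unfolded fill_eq]

lemma fill_App: "\<exists>a b. fill e t = App a b" by (cases e) auto

lemma st_App: "st t t' \<Longrightarrow> \<exists>a b. t = App a b"
  by (induct rule: st.induct) (auto simp: fill_App)
lemma nostep_C: "\<not> st (C c) b" using st_App by blast
lemma nostep_Lam: "\<not> st (Lam t) b" using st_App by blast
lemma nostep_Var: "\<not> st (Var t) b" using st_App by blast

lemma nostep_hd: "\<not> good_hd (hd_of t) \<Longrightarrow> \<not> st t b" using st_hd by blast

lemma nostep_mu: "length ts \<le> n \<Longrightarrow> \<not> st (apps (App (C (CFixMu n)) s) ts) b"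
proof (induct ts arbitrary: b rule: rev_induct)
  case Nil
  show ?case
    apply simp
    apply (rule notI)
    apply (erule st.cases)
    apply (auto simp: fill_eqs nostep_C split: frame.splits)
    done
next
  case (snoc x xs)
  show ?case
    apply simp
    apply (rule notI)
    apply (erule st.cases)
    using snoc apply (auto simp: fill_eqs split: frame.splits dest: apps_inj)
    done
qed

lemma fill_neq[simp]: "fill e t \<noteq> C c" "fill e t \<noteq> Lam u" "fill e t \<noteq> Var v"
  by (cases e; simp)+

lemma plug_notC: "plugE E (Var x) \<noteq> C c" "plugE E (Var x) \<noteq> Lam t"
  by (cases E; simp)+

lemma plug_arity: "plugE E (Var x) = apps (App (C (CFixMu n)) s) ts \<Longrightarrow> n < length ts"
proof (induct E arbitrary: ts)
  case Nil then show ?case by simp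
next
  case (Cons e E)
  show ?case
  proof (cases ts rule: rev_exhaust)
    case Nil with Cons.prems show ?thesis by (cases e) (auto simp: plug_notC)
  next
    case (snoc ys y) with Cons.prems Cons.hyps[of ys] show ?thesis by (cases e) (auto dest: apps_inj)
  qed
qed

lemma plug_hd: "hd_of (plugE E (Var x)) \<in> {Var x, C CFst, C CSnd, C CCase, C COut} \<union> range (\<lambda>n. C (CFixMu n))"
proof (induct E)
  case (Cons e E) then show ?case by (cases e) auto
qed simp


lemma plug_hd_neq: "hd_of t \<notin> {Var x, C CFst, C CSnd, C CCase, C COut} \<union> range (\<lambda>n. C (CFixMu n)) \<Longrightarrow> plugE E (Var x) \<noteq> t"
  using plug_hd[of E x] by auto

lemma plug_neq: "plugE E (Var x) \<noteq> App (App (C CPair) r) s"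
  "plugE E (Var x) \<noteq> App (C CIn) r" "plugE E (Var x) \<noteq> App (C CInl) r"
  "plugE E (Var x) \<noteq> App (C CInr) r" "plugE E (Var x) \<noteq> apps (App (C (CFixNu n)) s) ts"
  "plugE E (Var x) \<noteq> apps (App (C (CFixMu (length ts))) s) ts"
  apply (rule plug_hd_neq, auto)[1]
  apply (rule plug_hd_neq, auto)[1]
  apply (rule plug_hd_neq, auto)[1]
  apply (rule plug_hd_neq, auto)[1]
  apply (rule plug_hd_neq, auto)[1]
  using plug_arity[of E x "length ts" s ts] by auto

lemma ns[simp]: "\<not> st (App (App (C CPair) r) s) b"
  "\<not> st (App (C CIn) r) b" "\<not> st (App (C CInl) r) b"
  "\<not> st (App (C CInr) r) b" "\<not> st (App (C CPair) r) b" "\<not> st (apps (App (C (CFixNu n)) s) ts) b"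
  "\<not> st (apps (App (C (CFixMu (length ts))) s) ts) b"
  "\<not> st (C c) b" "\<not> st (Lam t) b"
  using nostep_mu[of ts "length ts" s b] nostep_C nostep_Lam by (auto dest!: st_hd)

lemma nostep_E: "\<not> st (plugE E (Var x)) b"
proof (induct E arbitrary: b)
  case Nil then show ?case by (simp add: nostep_Var)
next
  case (Cons e E)
  show ?case
    apply simp
    apply (rule notI)
    apply (erule st.cases)
    using Cons apply (auto simp: fill_eqs plug_neq plug_notC plug_neq[THEN not_sym] plug_notC[THEN not_sym] split: frame.splits)
    apply (case_tac e; case_tac ea; auto simp: plug_neq plug_notC plug_neq[THEN not_sym] plug_notC[THEN not_sym])
    done
qed

lemma In_neq_Nu: "App (C c) r = apps (App (C (CFixNu n)) s) ts \<Longrightarrow> c = CFixNu n"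
  by (drule arg_cong[where f=hd_of]) simp

lemma In_neq_Nu'[simp]: "App (C CIn) r \<noteq> apps (App (C (CFixNu n)) s) ts"
  "apps (App (C (CFixNu n)) s) ts \<noteq> App (C CIn) r"
  using In_neq_Nu[of CIn r n s ts] by auto

lemma fill_fill: "fill e t = fill e' t' \<Longrightarrow> st t a \<Longrightarrow> st t' b \<Longrightarrow> e = e' \<and> t = t'"
  by (cases e; cases e'; auto dest: apps_inj)

lemma inv_fr: "st (fill e t) b \<Longrightarrow> st t a \<Longrightarrow> \<exists>t''. st t t'' \<and> b = fill e t''"
  apply (erule st.cases)
  apply (cases e; auto)
  apply (cases e; auto)
  apply (cases e; auto)
  apply (cases e; auto)
  apply (cases e; auto)
  apply (cases e; auto)
  apply (cases e; auto)
  apply (cases e; auto)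
  apply (drule fill_fill; auto)
  done

lemma inv_beta: "st (App (Lam t) s) b \<Longrightarrow> b = subst t 0 s"
  by (erule st.cases) (auto simp: fill_eqs split: frame.splits)
lemma inv_fst: "st (App (C CFst) (App (App (C CPair) r) s)) b \<Longrightarrow> b = r"
  by (erule st.cases) (auto simp: fill_eqs split: frame.splits)
lemma inv_snd: "st (App (C CSnd) (App (App (C CPair) r) s)) b \<Longrightarrow> b = s"
  by (erule st.cases) (auto simp: fill_eqs split: frame.splits)
lemma inv_out: "st (App (C COut) (App (C CIn) r)) b \<Longrightarrow> b = r"
  by (erule st.cases) (auto simp: fill_eqs split: frame.splits)
lemma inv_inl: "st (App (C CCase) (App (C CInl) r)) b \<Longrightarrow> b = case_l r"
  by (erule st.cases) (auto simp: fill_eqs split: frame.splits)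
lemma inv_inr: "st (App (C CCase) (App (C CInr) r)) b \<Longrightarrow> b = case_r r"
  by (erule st.cases) (auto simp: fill_eqs split: frame.splits)
lemma inv_mu: "length ts = n \<Longrightarrow> st (App (apps (App (C (CFixMu n)) s) ts) (App (C CIn) r)) b \<Longrightarrow>
   b = App (apps (App s (App (C (CFixMu n)) s)) ts) (App (C CIn) r)"
  by (erule st.cases) (auto simp: fill_eqs split: frame.splits dest: apps_inj)
lemma inv_nu: "length ts = n \<Longrightarrow> st (App (C COut) (apps (App (C (CFixNu n)) s) ts)) b \<Longrightarrow>
   b = App (C COut) (apps (App s (App (C (CFixNu n)) s)) ts)"
  apply (erule st.cases)
  apply (auto simp: fill_eqs split: frame.splits)
  apply (drule apps_inj, simp)
  done

lemma st_det: "st t a \<Longrightarrow> st t b \<Longrightarrow> a = b"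
proof (induct arbitrary: b rule: st.induct)
  case (fr t t' e)
  obtain t'' where "st t t''" "b = fill e t''" using inv_fr[OF fr(3) fr(1)] by blast
  then show ?case using fr(2) by metis
next
  case beta then show ?case using inv_beta by metis
next
  case fst then show ?case using inv_fst by metis
next
  case snd then show ?case using inv_snd by metis
next
  case out_in then show ?case using inv_out by metis
next
  case case_inl then show ?case using inv_inl by metis
next
  case case_inr then show ?case using inv_inr by metis
next
  case fix_mu then show ?case using inv_mu by metis
next
  case fix_nu then show ?case using inv_nu by metis
qed

lemma V_nf: "t \<in> V \<Longrightarrow> \<not> st t b"
  unfolding V_def using nostep_E
  by (auto elim!: is_value.cases simp: nostep_mu)

lemma tr_split: "st\<^sup>+\<^sup>+ a c \<Longrightarrow> st a c \<or> (\<exists>b. st a b \<and> st\<^sup>+\<^sup>+ b c)"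
  by (erule converse_tranclpE) auto

lemma trancl_det: "st\<^sup>+\<^sup>+ t t1 \<Longrightarrow> st\<^sup>+\<^sup>+ t t2 \<Longrightarrow> (\<And>b. \<not> st t1 b) \<Longrightarrow> (\<And>b. \<not> st t2 b) \<Longrightarrow> t1 = t2"
proof (induct arbitrary: t2 rule: converse_tranclp_induct)
  case (base y)
  from tr_split[OF base(2)] show ?case
  proof
    assume "st y t2" then show ?thesis using st_det[OF base(1)] by simp
  next
    assume "\<exists>c. st y c \<and> st\<^sup>+\<^sup>+ c t2"
    then obtain c where c: "st y c" "st\<^sup>+\<^sup>+ c t2" by blast
    then have "c = t1" using st_det[OF base(1)] by simp
    with c obtain d where "st t1 d" using tranclpD by metis
    with base(3) show ?thesis by blast
  qed
next
  case (step y z)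
  from tr_split[OF step(4)] show ?case
  proof
    assume "st y t2"
    then have "t2 = z" using st_det[OF step(1)] by simp
    moreover obtain d where "st z d" using tranclpD[OF step(2)] by metis
    ultimately show ?thesis using step(6) by blast
  next
    assume "\<exists>c. st y c \<and> st\<^sup>+\<^sup>+ c t2"
    then obtain c where c: "st y c" "st\<^sup>+\<^sup>+ c t2" by blast
    then have "c = z" using st_det[OF step(1)] by simp
    then show ?thesis using step(3)[of t2] c step(5,6) by blast
  qed
qed

lemma safe_det: "safe t t1 \<Longrightarrow> safe t t2 \<Longrightarrow> t1 \<in> V \<Longrightarrow> t2 \<in> V \<Longrightarrow> t1 = t2"
  using trancl_det safe_st V_nf by blast

theorem lemma4p5:
  fixes l :: "'o::wellorder"
    and A B :: "'o \<Rightarrow> tm set"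
    and r :: tm
    and e :: frame
  assumes "is_nonzero_limit l"
  shows "ord_limsup (\<lambda>a. app_set r (A a)) l \<subseteq> app_set r (ord_limsup A l) \<and>
     ord_limsup (\<lambda>a. frame_inv e (A a)) l \<subseteq> frame_inv e (ord_limsup A l) \<and>
     ord_limsup (\<lambda>a. A a \<union> B a) l \<subseteq> ord_limsup A l \<union> ord_limsup B l \<and>
     ((\<forall>a<l. A a \<subseteq> V) \<longrightarrow>
           ord_limsup (\<lambda>a. safe_pre (A a)) l \<subseteq> safe_pre (ord_limsup A l))"
proof (intro conjI impI)
  obtain z where z: "z < l" using assms unfolding is_nonzero_limit_def by blast
  show "ord_limsup (\<lambda>a. app_set r (A a)) l \<subseteq> app_set r (ord_limsup A l)"
  proof
    fix t assume t: "t \<in> ord_limsup (\<lambda>a. app_set r (A a)) l"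
    then obtain a where "t \<in> app_set r (A a)" using z unfolding mem_limsup by blast
    then obtain s where s: "t = App r s" unfolding app_set_def by blast
    have "s \<in> ord_limsup A l" using t unfolding mem_limsup app_set_def s by auto
    then show "t \<in> app_set r (ord_limsup A l)" unfolding app_set_def s by auto
  qed
  show "ord_limsup (\<lambda>a. frame_inv e (A a)) l \<subseteq> frame_inv e (ord_limsup A l)"
    unfolding mem_limsup frame_inv_def subset_iff by simp
  show "ord_limsup (\<lambda>a. A a \<union> B a) l \<subseteq> ord_limsup A l \<union> ord_limsup B l"
  proof
    fix t assume t: "t \<in> ord_limsup (\<lambda>a. A a \<union> B a) l"
    show "t \<in> ord_limsup A l \<union> ord_limsup B l"
    proof (rule ccontr)
      assume "t \<notin> ord_limsup A l \<union> ord_limsup B l"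
      then obtain a0 b0 where a0: "a0 < l" "\<forall>a. a0 \<le> a \<and> a < l \<longrightarrow> t \<notin> A a"
        and b0: "b0 < l" "\<forall>a. b0 \<le> a \<and> a < l \<longrightarrow> t \<notin> B a"
        by (simp only: Un_iff mem_limsup de_Morgan_disj not_all not_ex) blast
      have "max a0 b0 < l" using a0 b0 by simp
      then obtain a where "max a0 b0 \<le> a" "a < l" "t \<in> A a \<union> B a"
        using t unfolding mem_limsup by blast
      with a0 b0 show False by auto
    qed
  qed
  assume AV: "\<forall>a<l. A a \<subseteq> V"
  show "ord_limsup (\<lambda>a. safe_pre (A a)) l \<subseteq> safe_pre (ord_limsup A l)"
  proof
    fix t assume t: "t \<in> ord_limsup (\<lambda>a. safe_pre (A a)) l"
    show "t \<in> safe_pre (ord_limsup A l)"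
    proof (cases "t \<in> ord_limsup A l")
      case True then show ?thesis unfolding safe_pre_def by blast
    next
      case False
      then obtain a0 where a0: "a0 < l" "\<forall>a. a0 \<le> a \<and> a < l \<longrightarrow> t \<notin> A a"
        unfolding mem_limsup by auto
      then obtain a1 where a1: "a0 \<le> a1" "a1 < l" "t \<in> safe_pre (A a1)"
        using t unfolding mem_limsup by blast
      then obtain t1 where t1: "safe t t1" "t1 \<in> A a1" using a0 unfolding safe_pre_def by blast
      have "t1 \<in> ord_limsup A l"
        unfolding mem_limsup
      proof (intro allI impI)
        fix b0 assume "b0 < l"
        have "max a0 b0 < l" using a0 \<open>b0 < l\<close> by simp
        then obtain a where a: "max a0 b0 \<le> a" "a < l" "t \<in> safe_pre (A a)"
          using t unfolding mem_limsup by blast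
        then obtain t2 where t2: "safe t t2" "t2 \<in> A a" using a0 unfolding safe_pre_def by auto
        have "t2 = t1" using safe_det[OF t2(1) t1(1)] t1 t2 AV a a1 by blast
        then show "\<exists>a\<ge>b0. a < l \<and> t1 \<in> A a" using a t2 by auto
      qed
      then show ?thesis using t1 unfolding safe_pre_def by blast
    qed
  qed
qed

end
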